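(* Let $\Omega\subset\mathbb{R}^d$ be a bounded Lipschitz domain, $p\in(1,\infty)$, $\Phi$ satisfying (G), $(\rho_n)$ satisfying (A). Suppose that along some subsequence $(n_k)$ the functionals $\overline{F}_{n_k}(\cdot,\Omega)$ $\Gamma$-converge in the strong topology of $L^p(\Omega;\mathbb{R}^d)$ to a functional $\overline{F}_\infty$ with $\overline{F}_\infty(\mathbf{v})=\int_\Omega f_\infty(\nabla\mathbf{v})d\mathbf{x}$ for all $\mathbf{v}\in W^{1,p}(\Omega;\mathbb{R}^d)$, where $f_\infty:\mathbb{R}^{d\times d}\to\mathbb{R}$ is continuous. Then $f_\infty(\mathbb{U}\mathbb{F})=f_\infty(\mathbb{F})$ for all $\mathbb{F}\in\mathbb{R}^{d\times d}$ and $\mathbb{U}\in\mathcal{O}(d)$.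
   Context: (G): $\Phi:[0,\infty)\to[0,\infty)$ is nondecreasing and convex, with constants $C_0,C_1>0$ such that $C_0(a^p-1)\le\Phi(a)\le C_1(1+a^p)$ for all $a\ge0$, and $\Phi(a)=0$ iff $a=0$. (A): each $\rho_n:\mathbb{R}^d\to[0,\infty)$ is radial and integrable, $\int_{\mathbb{R}^d}\rho_n=1$, and $\lim_{n\to\infty}\int_{\mathbb{R}^d\setminus B(\mathbf{0},\delta)}\rho_n=0$ for every $\delta>0$. $\mathfrak{W}^{\rho,p}(\Omega;\mathbb{R}^d)=\{\mathbf{v}\in L^p(\Omega;\mathbb{R}^d):\int_\Omega\int_\Omega\rho(\mathbf{x}-\mathbf{y})\frac{|\mathbf{v}(\mathbf{x})-\mathbf{v}(\mathbf{y})|^p}{|\mathbf{x}-\mathbf{y}|^p}d\mathbf{y}d\mathbf{x}<\infty\}$; $\overline{F}_n(\mathbf{v},\Omega)=\int_\Omega\int_\Omega\rho_n(\mathbf{x}-\mathbf{y})\Phi\big(\big|\frac{|\mathbf{v}(\mathbf{x})-\mathbf{v}(\mathbf{y})|}{|\mathbf{x}-\mathbf{y}|}-1\big|\big)d\mathbf{y}d\mathbf{x}$ if $\mathbf{v}\in\mathfrak{W}^{\rho_n,p}(\Omega;\mathbb{R}^d)$ and $+\infty$ otherwise. $\mathcal{O}(d)=\{\mathbb{U}\in\mathbb{R}^{d\times d}:\mathbb{U}^T\mathbb{U}=\mathbb{I}\}$. *)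

theory Defs
  imports "HOL-Analysis.Analysis"
begin

definition lipschitz_domain :: "(real^'n) set \<Rightarrow> bool" where
  "lipschitz_domain \<Omega> \<longleftrightarrow> open \<Omega> \<and> connected \<Omega> \<and> \<Omega> \<noteq> {} \<and>
     (\<forall>x\<in>frontier \<Omega>. \<exists>r>0. \<exists>R::real^'n^'n. \<exists>k::'n. \<exists>g::real^'n \<Rightarrow> real. \<exists>L.
        orthogonal_matrix R \<and> L-lipschitz_on UNIV g \<and>
        (\<forall>z t. g (\<chi> i. if i = k then t else z $ i) = g z) \<and>
        \<Omega> \<inter> ball x r = {y \<in> ball x r. (R *v (y - x)) $ k < g (R *v (y - x))})"

definition Lp :: "real \<Rightarrow> (real^'n) set \<Rightarrow> (real^'n \<Rightarrow> 'b::euclidean_space) \<Rightarrow> bool" where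
  "Lp p \<Omega> v \<longleftrightarrow> v \<in> borel_measurable (lebesgue_on \<Omega>) \<and>
     integrable (lebesgue_on \<Omega>) (\<lambda>x. norm (v x) powr p)"

definition Lp_conv :: "real \<Rightarrow> (real^'n) set \<Rightarrow> (nat \<Rightarrow> real^'n \<Rightarrow> real^'n) \<Rightarrow> (real^'n \<Rightarrow> real^'n) \<Rightarrow> bool" where
  "Lp_conv p \<Omega> us u \<longleftrightarrow>
     (\<lambda>k. \<integral>\<^sup>+ x. ennreal (norm (us k x - u x) powr p) \<partial>lebesgue_on \<Omega>) \<longlonglongrightarrow> 0"

text \<open>Sequential Gamma-convergence in the strong L^p topology (L^p is metrizable).\<close>
definition gamma_conv_Lp ::
  "real \<Rightarrow> (real^'n) set \<Rightarrow> (nat \<Rightarrow> (real^'n \<Rightarrow> real^'n) \<Rightarrow> ereal) \<Rightarrow> ((real^'n \<Rightarrow> real^'n) \<Rightarrow> ereal) \<Rightarrow> bool" where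
  "gamma_conv_Lp p \<Omega> F Finf \<longleftrightarrow>
     (\<forall>u us. Lp p \<Omega> u \<and> (\<forall>k. Lp p \<Omega> (us k)) \<and> Lp_conv p \<Omega> us u \<longrightarrow>
         Finf u \<le> liminf (\<lambda>k. F k (us k))) \<and>
     (\<forall>u. Lp p \<Omega> u \<longrightarrow> (\<exists>us. (\<forall>k. Lp p \<Omega> (us k)) \<and> Lp_conv p \<Omega> us u \<and>
         limsup (\<lambda>k. F k (us k)) \<le> Finf u))"

definition pderiv_at :: "(real^'n \<Rightarrow> real) \<Rightarrow> 'n \<Rightarrow> real^'n \<Rightarrow> real" where
  "pderiv_at \<phi> j x = frechet_derivative \<phi> (at x) (axis j 1)"

fun Ck :: "nat \<Rightarrow> (real^'n \<Rightarrow> real) \<Rightarrow> bool" where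
  "Ck 0 \<phi> \<longleftrightarrow> continuous_on UNIV \<phi>"
| "Ck (Suc m) \<phi> \<longleftrightarrow> continuous_on UNIV \<phi> \<and> (\<forall>x. \<phi> differentiable (at x)) \<and>
      (\<forall>j. Ck m (pderiv_at \<phi> j))"

definition test_fun :: "(real^'n) set \<Rightarrow> (real^'n \<Rightarrow> real) \<Rightarrow> bool" where
  "test_fun \<Omega> \<phi> \<longleftrightarrow> (\<forall>m. Ck m \<phi>) \<and>
     compact (closure {x. \<phi> x \<noteq> 0}) \<and> closure {x. \<phi> x \<noteq> 0} \<subseteq> \<Omega>"

text \<open>G is a weak gradient of v on \<Omega>: (G x) $ i $ j is the weak derivative d_j v_i.\<close>
definition weak_gradient :: "(real^'n) set \<Rightarrow> (real^'n \<Rightarrow> real^'n) \<Rightarrow> (real^'n \<Rightarrow> real^'n^'n) \<Rightarrow> bool" where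
  "weak_gradient \<Omega> v G \<longleftrightarrow>
     (\<forall>i j. (\<lambda>x. G x $ i $ j) \<in> borel_measurable (lebesgue_on \<Omega>)) \<and>
     (\<forall>\<phi>. test_fun \<Omega> \<phi> \<longrightarrow> (\<forall>i j.
        integrable (lebesgue_on \<Omega>) (\<lambda>x. v x $ i * pderiv_at \<phi> j x) \<and>
        integrable (lebesgue_on \<Omega>) (\<lambda>x. G x $ i $ j * \<phi> x) \<and>
        (\<integral>x. v x $ i * pderiv_at \<phi> j x \<partial>lebesgue_on \<Omega>) =
          - (\<integral>x. G x $ i $ j * \<phi> x \<partial>lebesgue_on \<Omega>)))"

definition W1p :: "real \<Rightarrow> (real^'n) set \<Rightarrow> (real^'n \<Rightarrow> real^'n) \<Rightarrow> (real^'n \<Rightarrow> real^'n^'n) \<Rightarrow> bool" where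
  "W1p p \<Omega> v G \<longleftrightarrow> Lp p \<Omega> v \<and> Lp p \<Omega> G \<and> weak_gradient \<Omega> v G"

definition Wrho :: "(real^'n \<Rightarrow> real) \<Rightarrow> real \<Rightarrow> (real^'n) set \<Rightarrow> (real^'n \<Rightarrow> real^'n) \<Rightarrow> bool" where
  "Wrho \<rho> p \<Omega> v \<longleftrightarrow> Lp p \<Omega> v \<and>
     (\<integral>\<^sup>+ x. \<integral>\<^sup>+ y. ennreal (\<rho> (x - y) * (norm (v x - v y) / norm (x - y)) powr p)
        \<partial>lebesgue_on \<Omega> \<partial>lebesgue_on \<Omega>) < \<infinity>"

definition Fbar :: "(real \<Rightarrow> real) \<Rightarrow> (real^'n \<Rightarrow> real) \<Rightarrow> real \<Rightarrow> (real^'n \<Rightarrow> real^'n) \<Rightarrow> (real^'n) set \<Rightarrow> ereal" where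
  "Fbar \<Phi> \<rho> p v \<Omega> =
     (if Wrho \<rho> p \<Omega> v then
        enn2ereal (\<integral>\<^sup>+ x. \<integral>\<^sup>+ y. ennreal (\<rho> (x - y) *
            \<Phi> \<bar>norm (v x - v y) / norm (x - y) - 1\<bar>) \<partial>lebesgue_on \<Omega> \<partial>lebesgue_on \<Omega>)
      else \<infinity>)"

definition hypG :: "real \<Rightarrow> (real \<Rightarrow> real) \<Rightarrow> bool" where
  "hypG p \<Phi> \<longleftrightarrow> (\<forall>a\<ge>0. \<Phi> a \<ge> 0) \<and> mono_on {0..} \<Phi> \<and> convex_on {0..} \<Phi> \<and>
     (\<exists>C0>0. \<exists>C1>0. \<forall>a\<ge>0. C0 * (a powr p - 1) \<le> \<Phi> a \<and> \<Phi> a \<le> C1 * (1 + a powr p)) \<and>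
     (\<forall>a\<ge>0. \<Phi> a = 0 \<longleftrightarrow> a = 0)"

definition hypA :: "(nat \<Rightarrow> real^'n \<Rightarrow> real) \<Rightarrow> bool" where
  "hypA \<rho> \<longleftrightarrow> (\<forall>n.
       (\<forall>x. \<rho> n x \<ge> 0) \<and> (\<forall>x y. norm x = norm y \<longrightarrow> \<rho> n x = \<rho> n y) \<and>
       integrable lebesgue (\<rho> n) \<and> (\<integral>x. \<rho> n x \<partial>lebesgue) = 1) \<and>
     (\<forall>\<delta>>0. (\<lambda>n. \<integral>x. indicator (- ball 0 \<delta>) x * \<rho> n x \<partial>lebesgue) \<longlonglongrightarrow> 0)"

end

theory Submission
  imports Defs
begin


lemma orth_norm:
  fixes U :: "real^'n^'n"
  assumes "orthogonal_matrix U"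
  shows "norm (U *v x) = norm x"
proof -
  have "orthogonal_transformation (\<lambda>x. U *v x)"
    using assms by (simp add: orthogonal_transformation_matrix)
  then show ?thesis by (simp add: orthogonal_transformation_norm)
qed

lemma Lp_rot:
  fixes U :: "real^'n^'n" and v :: "real^'n \<Rightarrow> real^'n"
  assumes "orthogonal_matrix U" "Lp p \<Omega> v"
  shows "Lp p \<Omega> (\<lambda>x. U *v v x)"
proof -
  have c: "(\<lambda>y. U *v y) \<in> borel_measurable borel"
    by (intro borel_measurable_continuous_onI) (simp add: linear_continuous_on matrix_vector_mul_linear)
  have "(\<lambda>x. U *v v x) \<in> borel_measurable (lebesgue_on \<Omega>)"
    using measurable_compose[OF _ c] assms(2) unfolding Lp_def by blast
  then show ?thesis using assms by (simp add: Lp_def orth_norm)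
qed

lemma Fbar_rot:
  fixes U :: "real^'n^'n"
  assumes "orthogonal_matrix U"
  shows "Fbar \<Phi> \<rho> p (\<lambda>x. U *v v x) \<Omega> = Fbar \<Phi> \<rho> p v \<Omega>"
proof -
  have n: "\<And>x y. norm (U *v v x - U *v v y) = norm (v x - v y)"
    by (metis assms orth_norm matrix_vector_mult_diff_distrib)
  have "Lp p \<Omega> (\<lambda>x. U *v v x) = Lp p \<Omega> v"
  proof
    assume "Lp p \<Omega> (\<lambda>x. U *v v x)"
    then have "Lp p \<Omega> (\<lambda>x. transpose U *v (U *v v x))"
      using Lp_rot[of "transpose U"] assms by simp
    moreover have "transpose U ** U = mat 1" using assms orthogonal_matrix by blast
    ultimately show "Lp p \<Omega> v" by (simp add: matrix_vector_mul_assoc)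
  next
    assume "Lp p \<Omega> v" then show "Lp p \<Omega> (\<lambda>x. U *v v x)" using Lp_rot assms by blast
  qed
  then show ?thesis unfolding Fbar_def Wrho_def n by (simp only:)
qed

lemma Lp_conv_rot:
  fixes U :: "real^'n^'n"
  assumes "orthogonal_matrix U"
  shows "Lp_conv p \<Omega> (\<lambda>k x. U *v us k x) (\<lambda>x. U *v u x) = Lp_conv p \<Omega> us u"
proof -
  have n: "\<And>k x. norm (U *v us k x - U *v u x) = norm (us k x - u x)"
    by (metis assms orth_norm matrix_vector_mult_diff_distrib)
  show ?thesis unfolding Lp_conv_def n ..
qed

lemma gamma_rot_le:
  fixes U :: "real^'n^'n"
  assumes "orthogonal_matrix U" "Lp p \<Omega> u"
    and g: "gamma_conv_Lp p \<Omega> (\<lambda>k v. Fbar \<Phi> (\<rho> k) p v \<Omega>) Finf"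
  shows "Finf (\<lambda>x. U *v u x) \<le> Finf u"
proof -
  have g1: "\<And>u us. Lp p \<Omega> u \<Longrightarrow> (\<forall>k. Lp p \<Omega> (us k)) \<Longrightarrow> Lp_conv p \<Omega> us u \<Longrightarrow>
         Finf u \<le> liminf (\<lambda>k. Fbar \<Phi> (\<rho> k) p (us k) \<Omega>)"
    using g unfolding gamma_conv_Lp_def by auto
  have g2: "\<exists>us. (\<forall>k. Lp p \<Omega> (us k)) \<and> Lp_conv p \<Omega> us u \<and>
         limsup (\<lambda>k. Fbar \<Phi> (\<rho> k) p (us k) \<Omega>) \<le> Finf u"
    using g assms(2) unfolding gamma_conv_Lp_def by auto
  then obtain us where us: "\<forall>k. Lp p \<Omega> (us k)" "Lp_conv p \<Omega> us u"
    "limsup (\<lambda>k. Fbar \<Phi> (\<rho> k) p (us k) \<Omega>) \<le> Finf u"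
    by blast
  have a1: "Lp p \<Omega> (\<lambda>x. U *v u x)" by (rule Lp_rot[OF assms(1,2)])
  have a2: "\<forall>k. Lp p \<Omega> (\<lambda>x. U *v us k x)" using us(1) Lp_rot[OF assms(1)] by blast
  have a3: "Lp_conv p \<Omega> (\<lambda>k x. U *v us k x) (\<lambda>x. U *v u x)"
    using us(2) Lp_conv_rot[OF assms(1)] by blast
  have "Finf (\<lambda>x. U *v u x) \<le> liminf (\<lambda>k. Fbar \<Phi> (\<rho> k) p (\<lambda>x. U *v us k x) \<Omega>)"
    by (rule g1[OF a1 a2 a3])
  also have "(\<lambda>k. Fbar \<Phi> (\<rho> k) p (\<lambda>x. U *v us k x) \<Omega>) = (\<lambda>k. Fbar \<Phi> (\<rho> k) p (us k) \<Omega>)"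
    using Fbar_rot[OF assms(1)] by blast
  also have "liminf (\<lambda>k. Fbar \<Phi> (\<rho> k) p (us k) \<Omega>) \<le> limsup (\<lambda>k. Fbar \<Phi> (\<rho> k) p (us k) \<Omega>)"
    by (rule Liminf_le_Limsup) (rule trivial_limit_sequentially)
  finally show ?thesis using us(3) by (rule order_trans)
qed

lemma gamma_rot:
  fixes U :: "real^'n^'n"
  assumes "orthogonal_matrix U" "Lp p \<Omega> u"
    and g: "gamma_conv_Lp p \<Omega> (\<lambda>k v. Fbar \<Phi> (\<rho> k) p v \<Omega>) Finf"
  shows "Finf (\<lambda>x. U *v u x) = Finf u"
proof -
  have "Finf (\<lambda>x. transpose U *v (U *v u x)) \<le> Finf (\<lambda>x. U *v u x)"
    by (rule gamma_rot_le[OF _ _ g]) (use assms Lp_rot in auto)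
  moreover have "transpose U ** U = mat 1" using assms orthogonal_matrix by blast
  ultimately show ?thesis using gamma_rot_le[OF assms] by (simp add: matrix_vector_mul_assoc)
qed



lemma cs_integrable:
  fixes f :: "'a::euclidean_space \<Rightarrow> real"
  assumes "continuous_on UNIV f" "compact K" "\<And>x. x \<notin> K \<Longrightarrow> f x = 0"
  shows "integrable lborel f"
proof -
  have "integrable lborel (\<lambda>x. indicator K x *\<^sub>R f x)"
    by (rule borel_integrable_compact[OF assms(2)]) (use assms(1) continuous_on_subset in blast)
  moreover have "(\<lambda>x. indicator K x *\<^sub>R f x) = f"
    proof
    fix x show "indicator K x *\<^sub>R f x = f x" using assms(3)[of x] by (cases "x \<in> K") simp_all
  qed
  ultimately show ?thesis by simp
qed

lemma ibp0:
  fixes \<psi> :: "'a::euclidean_space \<Rightarrow> real"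
  assumes d: "\<And>x. (\<psi> has_derivative \<psi>' x) (at x)"
    and c: "continuous_on UNIV (\<lambda>x. \<psi>' x e)"
    and K: "compact K" and z: "\<And>x. x \<notin> K \<Longrightarrow> \<psi> x = 0"
  shows "integral\<^sup>L lborel (\<lambda>x. \<psi>' x e) = 0"
proof -
  define D where "D x = \<psi>' x e" for x
  have Dz: "D x = 0" if "x \<notin> K" for x
  proof -
    have "((\<lambda>_. 0) has_derivative \<psi>' x) (at x)"
      by (rule has_derivative_transform_within_open[OF d, of "- K"])
         (use K that z compact_imp_closed in auto)
    moreover have "((\<lambda>_. 0::real) has_derivative (\<lambda>_. 0)) (at x)" by simp
    ultimately have "\<psi>' x = (\<lambda>_. 0)" by (rule has_derivative_unique)
    then show ?thesis by (simp add: D_def)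
  qed
  have Dc: "continuous_on UNIV D" using c by (simp add: D_def[abs_def])
  have "bounded (D ` K)"
    by (rule compact_imp_bounded, rule compact_continuous_image)
       (use Dc K continuous_on_subset in blast)+
  then obtain M where M: "M > 0" "\<And>y. y \<in> D ` K \<Longrightarrow> norm y \<le> M"
    by (meson bounded_pos)
  have DM: "\<bar>D x\<bar> \<le> M" for x
    using M Dz[of x] by (cases "x \<in> K") auto
  have psic: "continuous_on UNIV \<psi>"
    using d has_derivative_continuous continuous_at_imp_continuous_on by blast
  have psii: "integrable lborel \<psi>" by (rule cs_integrable[OF psic K z])
  have psim: "\<psi> \<in> borel_measurable borel" using psic borel_measurable_continuous_onI by blast
  have gder: "((\<lambda>t. \<psi> (x + t *\<^sub>R e)) has_real_derivative D (x + t *\<^sub>R e)) (at t)" for x t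
  proof -
    have l: "((\<lambda>t. x + t *\<^sub>R e) has_derivative (\<lambda>t. t *\<^sub>R e)) (at t)"
      by (auto intro!: derivative_eq_intros)
    have "((\<lambda>t. \<psi> (x + t *\<^sub>R e)) has_derivative (\<lambda>s. \<psi>' (x + t *\<^sub>R e) (s *\<^sub>R e))) (at t)"
      using has_derivative_compose[OF l d] by simp
    moreover have "(\<lambda>s. \<psi>' (x + t *\<^sub>R e) (s *\<^sub>R e)) = (*) (D (x + t *\<^sub>R e))"
    proof
      fix s
      have "linear (\<psi>' (x + t *\<^sub>R e))"
        using d has_derivative_bounded_linear bounded_linear.linear by blast
      then show "\<psi>' (x + t *\<^sub>R e) (s *\<^sub>R e) = D (x + t *\<^sub>R e) * s"
        by (simp add: D_def linear_scale)
    qed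
    ultimately show ?thesis by (simp add: has_field_derivative_def)
  qed
  define h where "h n = inverse (real (Suc n))" for n
  have hpos: "h n > 0" "h n \<le> 1" for n unfolding h_def by (simp_all add: inverse_le_1_iff)
  define s where "s n x = (\<psi> (x + h n *\<^sub>R e) - \<psi> x) / h n" for n x
  define K1 where "K1 = {a + b |a b. a \<in> K \<and> b \<in> cball 0 (norm e)}"
  have K1c: "compact K1" unfolding K1_def by (rule compact_sums[OF K compact_cball])
  have sK1: "s n x = 0" if "x \<notin> K1" for n x
  proof -
    have z0: "(0::'a) \<in> cball 0 (norm e)" by simp
    have "x \<notin> K"
    proof
      assume "x \<in> K"
      then have "x + 0 \<in> K1" unfolding K1_def using z0 by blast
      then show False using that by simp
    qed
    moreover have "x + h n *\<^sub>R e \<notin> K"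
    proof
      assume a: "x + h n *\<^sub>R e \<in> K"
      have "norm (- (h n *\<^sub>R e)) \<le> norm e"
        using hpos[of n] by (simp add: mult_left_le_one_le)
      then have b: "- (h n *\<^sub>R e) \<in> cball 0 (norm e)" by simp
      have "(x + h n *\<^sub>R e) + - (h n *\<^sub>R e) \<in> K1" unfolding K1_def using a b by blast
      then show False using that by simp
    qed
    ultimately show ?thesis by (simp add: s_def z)
  qed
  have sb: "\<bar>s n x\<bar> \<le> M * indicator K1 x" for n x
  proof (cases "x \<in> K1")
    case False then show ?thesis using sK1 by simp
  next
    case True
    obtain t where "0 < t" "t < h n"
      "\<psi> (x + h n *\<^sub>R e) - \<psi> (x + 0 *\<^sub>R e) = (h n - 0) * D (x + t *\<^sub>R e)"
      using MVT2[of 0 "h n" "\<lambda>t. \<psi> (x + t *\<^sub>R e)" "\<lambda>t. D (x + t *\<^sub>R e)"] gder hpos[of n] by blast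
    then have "s n x = D (x + t *\<^sub>R e)" using hpos[of n] by (simp add: s_def)
    then show ?thesis using True DM by simp
  qed
  have sint: "integral\<^sup>L lborel (s n) = 0" for n
  proof -
    have mp: "(+) (h n *\<^sub>R e) \<in> measurable lborel borel" by simp
    have i1: "integrable lborel (\<lambda>x. \<psi> (h n *\<^sub>R e + x))"
    proof -
      have "integrable (distr lborel borel ((+) (h n *\<^sub>R e))) \<psi>"
        using psii by (simp only: lborel_distr_plus)
      then show ?thesis using integrable_distr_eq[OF mp psim] by simp
    qed
    have e1: "integral\<^sup>L lborel (\<lambda>x. \<psi> (h n *\<^sub>R e + x)) = integral\<^sup>L lborel \<psi>"
      using integral_distr[OF mp psim] by (simp only: lborel_distr_plus)
    have "integral\<^sup>L lborel (s n) = integral\<^sup>L lborel (\<lambda>x. \<psi> (h n *\<^sub>R e + x) - \<psi> x) / h n"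
      unfolding s_def by (simp add: add.commute)
    also have "\<dots> = 0" using i1 psii e1 by simp
    finally show ?thesis .
  qed
  have lim: "(\<lambda>n. integral\<^sup>L lborel (s n)) \<longlonglongrightarrow> integral\<^sup>L lborel D"
  proof (rule integral_dominated_convergence[where w="\<lambda>x. M * indicator K1 x"])
    show "D \<in> borel_measurable lborel" using Dc borel_measurable_continuous_onI by simp
    show "s n \<in> borel_measurable lborel" for n
      unfolding s_def using psim by simp
    show "integrable lborel (\<lambda>x. M * indicator K1 x)"
      using K1c emeasure_compact_finite[OF K1c] by (intro integrable_mult_right integrable_real_indicator)
        (auto simp: compact_imp_closed borel_closed)
    show "AE x in lborel. norm (s n x) \<le> M * indicator K1 x" for n
      using sb by simp
    show "AE x in lborel. (\<lambda>n. s n x) \<longlonglongrightarrow> D x"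
    proof (rule AE_I2)
      fix x
      have "((\<lambda>y. (\<psi> (x + y *\<^sub>R e) - \<psi> (x + 0 *\<^sub>R e)) / (y - 0)) \<longlongrightarrow> D (x + 0 *\<^sub>R e)) (at 0)"
        using gder[of x 0] unfolding has_field_derivative_iff .
      then have l0: "((\<lambda>y. (\<psi> (x + y *\<^sub>R e) - \<psi> x) / y) \<longlongrightarrow> D x) (at 0)" by simp
      have hl: "filterlim h (at 0) sequentially"
      proof -
        have "h = (\<lambda>n. inverse (real (Suc n)))" by (simp add: h_def fun_eq_iff)
        then have "h \<longlonglongrightarrow> 0" using LIMSEQ_inverse_real_of_nat by simp
        moreover have "eventually (\<lambda>n. h n \<in> UNIV \<and> h n \<noteq> 0) sequentially"
          using hpos by (simp add: less_imp_neq[symmetric])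
        ultimately show ?thesis unfolding filterlim_at by simp
      qed
      show "(\<lambda>n. s n x) \<longlonglongrightarrow> D x"
        using filterlim_compose[OF l0 hl] by (simp add: s_def o_def)
    qed
  qed
  then have "(\<lambda>n. 0) \<longlonglongrightarrow> integral\<^sup>L lborel D" using sint by simp
  then have "integral\<^sup>L lborel D = 0" using LIMSEQ_unique tendsto_const by blast
  then show ?thesis by (simp add: D_def[abs_def])
qed


lemma int_bd:
  fixes f :: "real^'n \<Rightarrow> real"
  assumes "continuous_on UNIV f" "bounded S" "S \<in> sets lebesgue"
  shows "integrable (lebesgue_on S) f"
proof -
  obtain a b where ab: "S \<subseteq> cbox a b" using assms(2) bounded_subset_cbox_symmetric by meson
  have "integrable (lebesgue_on (cbox a b)) f"
    by (rule continuous_imp_integrable) (use assms(1) continuous_on_subset in blast)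
  then have "set_integrable lebesgue (cbox a b) f"
    by (simp add: integrable_restrict_space set_integrable_def)
  then have "set_integrable lebesgue S f"
    by (rule set_integrable_subset) (use assms(3) ab in auto)
  then show ?thesis using assms(3)
    by (simp add: integrable_restrict_space set_integrable_def)
qed

lemma int_on_eq:
  fixes f :: "real^'n \<Rightarrow> real"
  assumes "\<Omega> \<in> sets lebesgue" "f \<in> borel_measurable borel" "\<And>x. x \<notin> \<Omega> \<Longrightarrow> f x = 0"
  shows "integral\<^sup>L (lebesgue_on \<Omega>) f = integral\<^sup>L lborel f"
proof -
  have "integral\<^sup>L (lebesgue_on \<Omega>) f = integral\<^sup>L lebesgue (\<lambda>x. indicator \<Omega> x *\<^sub>R f x)"
    using assms(1) by (simp add: integral_restrict_space)
  also have "(\<lambda>x. indicator \<Omega> x *\<^sub>R f x) = f"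
  proof
    fix x show "indicator \<Omega> x *\<^sub>R f x = f x" using assms(3)[of x] by (cases "x \<in> \<Omega>") simp_all
  qed
  also have "integral\<^sup>L lebesgue f = integral\<^sup>L lborel f"
    by (rule integral_completion) (use assms(2) in simp)
  finally show ?thesis .
qed

lemma deriv_zero_out:
  fixes \<phi> :: "'a::real_normed_vector \<Rightarrow> real"
  assumes "(\<phi> has_derivative \<phi>') (at x)" "closed K" "x \<notin> K" "\<And>y. y \<notin> K \<Longrightarrow> \<phi> y = 0"
  shows "\<phi>' = (\<lambda>_. 0)"
proof -
  have "((\<lambda>_. 0) has_derivative \<phi>') (at x)"
    by (rule has_derivative_transform_within_open[OF assms(1), of "- K"])
       (use assms in auto)
  moreover have "((\<lambda>_. 0::real) has_derivative (\<lambda>_. 0)) (at x)" by simp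
  ultimately show ?thesis by (rule has_derivative_unique)
qed

lemma W1p_lin:
  fixes A :: "real^'n^'n"
  assumes "open \<Omega>" "bounded \<Omega>" "p > 0"
  shows "W1p p \<Omega> (\<lambda>x. A *v x) (\<lambda>x. A)"
proof -
  have Om: "\<Omega> \<in> sets lebesgue" using assms(1) by simp
  have cl: "continuous_on UNIV (\<lambda>x. A *v x)"
    by (simp add: linear_continuous_on matrix_vector_mul_linear)
  have Lv: "Lp p \<Omega> (\<lambda>x. A *v x)"
    unfolding Lp_def
  proof
    show "(\<lambda>x. A *v x) \<in> borel_measurable (lebesgue_on \<Omega>)"
      using continuous_imp_measurable_on_sets_lebesgue[OF continuous_on_subset[OF cl] Om] by blast
    show "integrable (lebesgue_on \<Omega>) (\<lambda>x. norm (A *v x) powr p)"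
      by (rule int_bd[OF _ assms(2) Om], rule continuous_on_powr')
         (use assms(3) cl in \<open>auto intro!: continuous_intros\<close>)
  qed
  have LG: "Lp p \<Omega> (\<lambda>x. A)"
    unfolding Lp_def using int_bd[OF _ assms(2) Om, of "\<lambda>x. norm A powr p"] by simp
  have wg: "weak_gradient \<Omega> (\<lambda>x. A *v x) (\<lambda>x. A)"
    unfolding weak_gradient_def
  proof (rule conjI; intro allI impI)
    fix i j :: 'n
    show "(\<lambda>x. A $ i $ j) \<in> borel_measurable (lebesgue_on \<Omega>)" by simp
  next
    fix \<phi> :: "real^'n \<Rightarrow> real" and i j :: 'n
    assume tf: "test_fun \<Omega> \<phi>"
    define K where "K = closure {x. \<phi> x \<noteq> 0}"
    have tf': "(\<forall>m. Ck m \<phi>) \<and> compact K \<and> K \<subseteq> \<Omega>"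
      using tf unfolding test_fun_def K_def by blast
    then have Kc: "compact K" and KO: "K \<subseteq> \<Omega>" by blast+
    have Kz: "\<phi> x = 0" if "x \<notin> K" for x using that closure_subset[of "{x. \<phi> x \<noteq> 0}"] unfolding K_def by auto
    have C1: "Ck (Suc 0) \<phi>" using tf' by blast
    then have C1': "continuous_on UNIV \<phi> \<and> (\<forall>x. \<phi> differentiable (at x)) \<and>
      (\<forall>j. continuous_on UNIV (pderiv_at \<phi> j))" by simp
    then have phic: "continuous_on UNIV \<phi>" and phid: "\<And>x. \<phi> differentiable (at x)"
      and pdc: "\<And>j. continuous_on UNIV (pderiv_at \<phi> j)" by blast+
    define \<phi>' where "\<phi>' x = frechet_derivative \<phi> (at x)" for x
    have phider: "(\<phi> has_derivative \<phi>' x) (at x)" for x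
      using phid frechet_derivative_works unfolding \<phi>'_def by blast
    have pdz: "pderiv_at \<phi> j x = 0" if "x \<notin> K" for x
    proof -
      have "\<phi>' x = (\<lambda>_. 0)" by (rule deriv_zero_out[OF phider _ that Kz]) (use Kc compact_imp_closed in auto)
      then show ?thesis by (simp add: pderiv_at_def \<phi>'_def)
    qed
    define a where "a x = (A *v x) $ i" for x
    have abl: "bounded_linear a" unfolding a_def
      using bounded_linear_compose[OF bounded_linear_vec_nth matrix_vector_mul_bounded_linear] by blast
    have ac: "continuous_on UNIV a" using abl linear_continuous_on by blast
    have ader: "(a has_derivative a) (at x)" for x using abl bounded_linear_imp_has_derivative by blast
    have aj: "a (axis j 1) = A $ i $ j" by (simp add: a_def matrix_vector_mult_basis column_def)
    define \<psi>' where "\<psi>' x h = a x * \<phi>' x h + a h * \<phi> x" for x h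
    have psider: "((\<lambda>x. a x * \<phi> x) has_derivative \<psi>' x) (at x)" for x
      unfolding \<psi>'_def[abs_def] using has_derivative_mult[OF ader phider] by simp
    have psie: "\<psi>' x (axis j 1) = a x * pderiv_at \<phi> j x + A $ i $ j * \<phi> x" for x
      by (simp add: \<psi>'_def aj pderiv_at_def \<phi>'_def)
    have f1c: "continuous_on UNIV (\<lambda>x. a x * pderiv_at \<phi> j x)"
      by (rule continuous_on_mult[OF ac pdc])
    have f2c: "continuous_on UNIV (\<lambda>x. A $ i $ j * \<phi> x)"
      by (rule continuous_on_mult[OF continuous_on_const phic])
    have psic: "continuous_on UNIV (\<lambda>x. \<psi>' x (axis j 1))"
      unfolding psie by (rule continuous_on_add[OF f1c f2c])
    have "integral\<^sup>L lborel (\<lambda>x. \<psi>' x (axis j 1)) = 0"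
      by (rule ibp0[OF psider psic Kc]) (simp add: Kz)
    moreover have i1: "integrable lborel (\<lambda>x. a x * pderiv_at \<phi> j x)"
      by (rule cs_integrable[OF f1c Kc]) (simp add: pdz)
    moreover have i2: "integrable lborel (\<lambda>x. A $ i $ j * \<phi> x)"
      by (rule cs_integrable[OF f2c Kc]) (simp add: Kz)
    ultimately have E: "integral\<^sup>L lborel (\<lambda>x. a x * pderiv_at \<phi> j x) = - integral\<^sup>L lborel (\<lambda>x. A $ i $ j * \<phi> x)"
      unfolding psie by (simp add: Bochner_Integration.integral_add)
    have I1: "integral\<^sup>L (lebesgue_on \<Omega>) (\<lambda>x. a x * pderiv_at \<phi> j x) = integral\<^sup>L lborel (\<lambda>x. a x * pderiv_at \<phi> j x)"
      by (rule int_on_eq[OF Om]) (use f1c borel_measurable_continuous_onI pdz KO in auto)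
    have I2: "integral\<^sup>L (lebesgue_on \<Omega>) (\<lambda>x. A $ i $ j * \<phi> x) = integral\<^sup>L lborel (\<lambda>x. A $ i $ j * \<phi> x)"
      by (rule int_on_eq[OF Om]) (use f2c borel_measurable_continuous_onI Kz KO in auto)
    have Eq: "(\<integral>x. a x * pderiv_at \<phi> j x \<partial>lebesgue_on \<Omega>) = - (\<integral>x. A $ i $ j * \<phi> x \<partial>lebesgue_on \<Omega>)"
      by (simp only: I1 I2 E)
    show "integrable (lebesgue_on \<Omega>) (\<lambda>x. (A *v x) $ i * pderiv_at \<phi> j x) \<and>
        integrable (lebesgue_on \<Omega>) (\<lambda>x. A $ i $ j * \<phi> x) \<and>
        (\<integral>x. (A *v x) $ i * pderiv_at \<phi> j x \<partial>lebesgue_on \<Omega>) =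
          - (\<integral>x. A $ i $ j * \<phi> x \<partial>lebesgue_on \<Omega>)"
      using Eq int_bd[OF f1c assms(2) Om] int_bd[OF f2c assms(2) Om] unfolding a_def by blast
  qed
  show ?thesis unfolding W1p_def using Lv LG wg by blast
qed


theorem theorem5p3:
  fixes \<Omega> :: "(real^'n) set" and p :: real and \<Phi> :: "real \<Rightarrow> real"
    and \<rho> :: "nat \<Rightarrow> real^'n \<Rightarrow> real" and r :: "nat \<Rightarrow> nat"
    and Finf :: "(real^'n \<Rightarrow> real^'n) \<Rightarrow> ereal" and finf :: "real^'n^'n \<Rightarrow> real"
  assumes "lipschitz_domain \<Omega>" and "bounded \<Omega>"
    and "1 < p"
    and "hypG p \<Phi>"
    and "hypA \<rho>"
    and "strict_mono r"
    and "gamma_conv_Lp p \<Omega> (\<lambda>k v. Fbar \<Phi> (\<rho> (r k)) p v \<Omega>) Finf"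
    and "continuous_on UNIV finf"
    and "\<And>v G. W1p p \<Omega> v G \<Longrightarrow>
           integrable (lebesgue_on \<Omega>) (\<lambda>x. finf (G x)) \<and>
           Finf v = ereal (\<integral>x. finf (G x) \<partial>lebesgue_on \<Omega>)"
  shows "\<forall>F U. orthogonal_matrix U \<longrightarrow> finf (U ** F) = finf F"
proof (intro allI impI)
  fix F U :: "real^'n^'n"
  assume U: "orthogonal_matrix U"
  have Oo: "open \<Omega>" and One: "\<Omega> \<noteq> {}" using assms(1) unfolding lipschitz_domain_def by auto
  have p0: "p > 0" using assms(3) by simp
  have W1: "W1p p \<Omega> (\<lambda>x. F *v x) (\<lambda>x. F)" by (rule W1p_lin[OF Oo assms(2) p0])
  have W2: "W1p p \<Omega> (\<lambda>x. (U ** F) *v x) (\<lambda>x. U ** F)" by (rule W1p_lin[OF Oo assms(2) p0])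
  have Lv: "Lp p \<Omega> (\<lambda>x. F *v x)" using W1 unfolding W1p_def by blast
  have "Finf (\<lambda>x. U *v (F *v x)) = Finf (\<lambda>x. F *v x)" by (rule gamma_rot[OF U Lv assms(7)])
  then have "Finf (\<lambda>x. (U ** F) *v x) = Finf (\<lambda>x. F *v x)" by (simp add: matrix_vector_mul_assoc)
  then have "ereal (\<integral>x. finf (U ** F) \<partial>lebesgue_on \<Omega>) = ereal (\<integral>x. finf F \<partial>lebesgue_on \<Omega>)"
    using assms(9)[OF W1] assms(9)[OF W2] by simp
  then have eq: "(\<integral>x. finf (U ** F) \<partial>lebesgue_on \<Omega>) = (\<integral>x. finf F \<partial>lebesgue_on \<Omega>)" by simp
  have Om: "\<Omega> \<in> sets lebesgue" using Oo by simp
  have mO: "measure (lebesgue_on \<Omega>) (space (lebesgue_on \<Omega>)) = measure lebesgue \<Omega>"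
    using Om by (simp add: space_restrict_space measure_restrict_space)
  obtain x where x: "x \<in> \<Omega>" using One by blast
  obtain e where e: "e > 0" "ball x e \<subseteq> \<Omega>" using Oo x open_contains_ball by blast
  have Ol: "\<Omega> \<in> lmeasurable" by (rule bounded_set_imp_lmeasurable[OF assms(2) Om])
  have "0 < measure lebesgue (ball x e)" using content_ball_pos[OF e(1)] by simp
  also have "\<dots> \<le> measure lebesgue \<Omega>"
    by (rule measure_mono_fmeasurable[OF e(2) _ Ol]) simp
  finally have pos: "measure lebesgue \<Omega> > 0" .
  have "measure lebesgue \<Omega> * finf (U ** F) = measure lebesgue \<Omega> * finf F"
    using eq mO by simp
  then show "finf (U ** F) = finf F" using pos by simp
qed

end
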